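(* Consider the problem $\min_{x\in\mathbb{R}^n}\max_{y\in\Delta}F(x)^Ty$ and assume strict complementarity holds. For any $x^*$ for which some $y$ makes $(x^*,y)$ a stationary solution, there is exactly one $y\in\Delta$ such that $(x^*,y)$ is a stationary solution, and exactly one pair $(\mu,\nu)$ such that $(x^*,y,\mu,\nu)$ satisfies the KKT system.
   Context: $F(x)=(f_1(x),\dots,f_m(x))^T$ is a smooth map $\mathbb{R}^n\to\mathbb{R}^m$ and $\Delta$ the probability simplex in $\mathbb{R}^m$. KKT system for $(x^*,y,\mu,\nu)$: $\sum_iy_i\nabla f_i(x^* )=0$, $\sum_iy_i=1$, $y_i\ge0$, $\mu-\nu_i=f_i(x^* )$, $\nu_i\ge0$, $\nu_iy_i=0$ for all $i$; $(x^*,y)$ is a stationary solution if the KKT system has a solution $(\mu,\nu)$. Strict complementarity: for every solution of the KKT system, $\nu_i>0$ for all $i$ with $y_i=0$. *)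

theory Defs
  imports "HOL-Analysis.Analysis"
begin

text \<open>Components f i of F, indexed by a finite type 'm (so m = CARD('m) \<ge> 1);
  x ranges over real^'n (n = CARD('n)).\<close>

definition grad :: "(real^'n \<Rightarrow> real) \<Rightarrow> real^'n \<Rightarrow> real^'n" where
  "grad g x = (THE D. (g has_derivative (\<lambda>h. h \<bullet> D)) (at x))"

definition prob_simplex :: "('m::finite \<Rightarrow> real) set" where
  "prob_simplex = {y. (\<forall>i. 0 \<le> y i) \<and> (\<Sum>i\<in>UNIV. y i) = 1}"

definition KKT ::
  "('m::finite \<Rightarrow> real^'n \<Rightarrow> real) \<Rightarrow> real^'n \<Rightarrow> ('m \<Rightarrow> real) \<Rightarrow> real \<Rightarrow> ('m \<Rightarrow> real) \<Rightarrow> bool" where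
  "KKT f x y \<mu> \<nu> \<longleftrightarrow>
     (\<Sum>i\<in>UNIV. y i *\<^sub>R grad (f i) x) = 0 \<and>
     (\<Sum>i\<in>UNIV. y i) = 1 \<and> (\<forall>i. 0 \<le> y i) \<and>
     (\<forall>i. \<mu> - \<nu> i = f i x) \<and> (\<forall>i. 0 \<le> \<nu> i) \<and> (\<forall>i. \<nu> i * y i = 0)"

definition stationary ::
  "('m::finite \<Rightarrow> real^'n \<Rightarrow> real) \<Rightarrow> real^'n \<Rightarrow> ('m \<Rightarrow> real) \<Rightarrow> bool" where
  "stationary f x y \<longleftrightarrow> (\<exists>\<mu> \<nu>. KKT f x y \<mu> \<nu>)"

definition strict_complementarity :: "('m::finite \<Rightarrow> real^'n \<Rightarrow> real) \<Rightarrow> bool" where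
  "strict_complementarity f \<longleftrightarrow>
     (\<forall>x y \<mu> \<nu>. KKT f x y \<mu> \<nu> \<longrightarrow> (\<forall>i. y i = 0 \<longrightarrow> 0 < \<nu> i))"

end

theory Submission
  imports Defs
begin

lemma KKT_mu_le:
  assumes "KKT f x y \<mu> \<nu>" "KKT f x y' \<mu>' \<nu>'"
  shows "\<mu> \<le> \<mu>'"
proof -
  have s: "(\<Sum>i\<in>UNIV. y i) = 1" and nn: "\<forall>i. 0 \<le> y i"
    using assms(1) unfolding KKT_def by auto
  obtain i where "y i \<noteq> 0"
  proof (rule ccontr)
    assume "\<not> thesis"
    with that have "\<forall>i. y i = 0" by blast
    with s show False by simp
  qed
  then have "\<nu> i = 0" using assms(1) unfolding KKT_def by auto
  then have "\<mu> = f i x" using assms(1) unfolding KKT_def by (metis diff_zero)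
  moreover have "\<mu>' - \<nu>' i = f i x" "0 \<le> \<nu>' i" using assms(2) unfolding KKT_def by auto
  ultimately show ?thesis by linarith
qed

lemma KKT_unique:
  assumes "KKT f x y \<mu> \<nu>" "KKT f x y' \<mu>' \<nu>'"
  shows "\<mu> = \<mu>' \<and> \<nu> = \<nu>'"
proof -
  have "\<mu> = \<mu>'" using KKT_mu_le[OF assms] KKT_mu_le[OF assms(2,1)] by simp
  moreover have "\<forall>i. \<mu> - \<nu> i = f i x" "\<forall>i. \<mu>' - \<nu>' i = f i x"
    using assms unfolding KKT_def by auto
  ultimately show ?thesis by (simp add: fun_eq_iff) (metis add_diff_cancel_left' diff_diff_eq2 diff_add_cancel)
qed

lemma y_unique:
  fixes f :: "'m::finite \<Rightarrow> real^'n \<Rightarrow> real"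
  assumes sc: "strict_complementarity f"
    and k1: "KKT f x y1 \<mu>1 \<nu>1" and k2: "KKT f x y2 \<mu>2 \<nu>2"
  shows "y1 = y2"
proof (rule ccontr)
  assume ne: "y1 \<noteq> y2"
  have e: "\<mu>1 = \<mu>2" "\<nu>1 = \<nu>2" using KKT_unique[OF k1 k2] by auto
  have s1: "(\<Sum>i\<in>UNIV. y1 i) = 1" and n1: "\<forall>i. 0 \<le> y1 i"
    and g1: "(\<Sum>i\<in>UNIV. y1 i *\<^sub>R grad (f i) x) = 0"
    and m1: "\<forall>i. \<mu>1 - \<nu>1 i = f i x" and v1: "\<forall>i. 0 \<le> \<nu>1 i" and c1: "\<forall>i. \<nu>1 i * y1 i = 0"
    using k1 unfolding KKT_def by auto
  have s2: "(\<Sum>i\<in>UNIV. y2 i) = 1" and n2: "\<forall>i. 0 \<le> y2 i"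
    and g2: "(\<Sum>i\<in>UNIV. y2 i *\<^sub>R grad (f i) x) = 0"
    and c2: "\<forall>i. \<nu>1 i * y2 i = 0"
    using k2 e unfolding KKT_def by auto
  define S where "S = {i. y2 i < y1 i}"
  have "S \<noteq> {}"
  proof
    assume "S = {}"
    then have ge: "\<forall>i. 0 \<le> y2 i - y1 i" unfolding S_def by (auto simp: not_less)
    have "(\<Sum>i\<in>UNIV. y2 i - y1 i) = 0" using s1 s2 by (simp add: sum_subtractf)
    then have "\<forall>i. y2 i - y1 i = 0" using ge by (simp add: sum_nonneg_eq_0_iff)
    then show False using ne by auto
  qed
  define r where "r i = y1 i / (y1 i - y2 i)" for i
  have fS: "finite S" by simp
  define t where "t = Min (r ` S)"
  have "t \<in> r ` S" unfolding t_def using fS \<open>S \<noteq> {}\<close> by simp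
  then obtain j where jS: "j \<in> S" and tj: "t = r j" by auto
  have tle: "\<And>i. i \<in> S \<Longrightarrow> t \<le> r i" unfolding t_def using fS by simp
  have y1j: "y1 j > 0" using jS n2 unfolding S_def by (metis mem_Collect_eq order_le_less_trans)
  have t0: "t \<ge> 0" using tj jS n1 unfolding r_def S_def by simp
  define y where "y i = y1 i + t * (y2 i - y1 i)" for i
  have ynn: "\<forall>i. 0 \<le> y i"
  proof
    fix i
    show "0 \<le> y i"
    proof (cases "i \<in> S")
      case True
      then have d: "y1 i - y2 i > 0" unfolding S_def by simp
      have "t \<le> y1 i / (y1 i - y2 i)" using tle[OF True] unfolding r_def .
      then have "t * (y1 i - y2 i) \<le> y1 i" using d by (simp add: pos_le_divide_eq)
      then show ?thesis unfolding y_def by (simp add: algebra_simps)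
    next
      case False
      then have "y2 i - y1 i \<ge> 0" unfolding S_def by simp
      then show ?thesis unfolding y_def using t0 n1 by simp
    qed
  qed
  have yj: "y j = 0"
  proof -
    have d: "y1 j - y2 j > 0" using jS unfolding S_def by simp
    have "t * (y1 j - y2 j) = y1 j" using tj d unfolding r_def by simp
    then show ?thesis unfolding y_def by (simp add: algebra_simps)
  qed
  have ys: "(\<Sum>i\<in>UNIV. y i) = 1"
    unfolding y_def using s1 s2
    by (simp add: sum.distrib sum_distrib_left[symmetric] sum_subtractf)
  have yg: "(\<Sum>i\<in>UNIV. y i *\<^sub>R grad (f i) x) = 0"
  proof -
    have "(\<Sum>i\<in>UNIV. y i *\<^sub>R grad (f i) x) =
      (1 - t) *\<^sub>R (\<Sum>i\<in>UNIV. y1 i *\<^sub>R grad (f i) x) + t *\<^sub>R (\<Sum>i\<in>UNIV. y2 i *\<^sub>R grad (f i) x)"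
      unfolding y_def scaleR_sum_right sum.distrib[symmetric]
      by (rule sum.cong) (auto simp: algebra_simps)
    then show ?thesis using g1 g2 by simp
  qed
  have yc: "\<forall>i. \<nu>1 i * y i = 0"
    proof
    fix i show "\<nu>1 i * y i = 0" using c1[rule_format, of i] c2[rule_format, of i]
      unfolding y_def by (auto simp: algebra_simps)
  qed
  have "KKT f x y \<mu>1 \<nu>1" unfolding KKT_def using yg ys ynn m1 v1 yc by blast
  then have "0 < \<nu>1 j" using sc yj unfolding strict_complementarity_def by blast
  moreover have "\<nu>1 j = 0" using c1 y1j by (metis mult_eq_0_iff less_irrefl)
  ultimately show False by simp
qed

theorem corollary1:
  fixes f :: "'m::finite \<Rightarrow> real^'n \<Rightarrow> real" and xs :: "real^'n"
  assumes smooth: "\<And>i x. f i differentiable (at x)"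
    and sc: "strict_complementarity f"
    and ex: "\<exists>y. stationary f xs y"
  shows "(\<exists>!y. y \<in> prob_simplex \<and> stationary f xs y) \<and>
         (\<forall>y. stationary f xs y \<longrightarrow> (\<exists>!p. KKT f xs y (fst p) (snd p)))"
proof
  obtain y where y: "stationary f xs y" using ex by blast
  have "y \<in> prob_simplex" using y unfolding stationary_def KKT_def prob_simplex_def by auto
  moreover have "\<And>y'. stationary f xs y' \<Longrightarrow> y' = y"
    using y y_unique[OF sc] unfolding stationary_def by metis
  ultimately show "\<exists>!y. y \<in> prob_simplex \<and> stationary f xs y" using y by blast
next
  show "\<forall>y. stationary f xs y \<longrightarrow> (\<exists>!p. KKT f xs y (fst p) (snd p))"
  proof (intro allI impI)
    fix y assume "stationary f xs y"
    then obtain \<mu> \<nu> where k: "KKT f xs y \<mu> \<nu>" unfolding stationary_def by blast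
    show "\<exists>!p. KKT f xs y (fst p) (snd p)"
    proof (rule ex1I[of _ "(\<mu>, \<nu>)"])
      show "KKT f xs y (fst (\<mu>, \<nu>)) (snd (\<mu>, \<nu>))" using k by simp
    next
      fix p assume "KKT f xs y (fst p) (snd p)"
      then show "p = (\<mu>, \<nu>)" using KKT_unique[OF k] by (metis prod.collapse)
    qed
  qed
qed

end
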